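(* Let $K$ be a sequence of positive integers approaching $\infty$, let $s\ge2$ be an integer, let $\mathbf b\in\mathcal{F}_s$, and let $A_{\mathbf b}=\{n\in\mathbb{N}:\mathrm{LB}_s(K_n)=\mathbf b\}$. Then there are real numbers $\gamma_n=o(1)$ and $\widetilde\gamma_n=o(1)$ such that $n\in A_{\mathbf b}$ if and only if $$\log_\phi(\mathbf b\cdot\widehat F)+\gamma_n\le\{\mathfrak F^{-1}(K_n)\}<\log_\phi(\widetilde{\mathbf b}\cdot\widehat F)+\widetilde\gamma_n,$$ where $\widetilde\gamma_n=0$ if $\mathbf b$ is the largest block in $\mathcal{F}_s$.
   Context: $F$: $F_1=1,F_2=2,F_{n+2}=F_{n+1}+F_n$. Zeckendorf expansion: $m=\sum_{k=1}^M\epsilon(k)F_{M-k+1}$ uniquely with $\epsilon(k)\in\{0,1\}$, $\epsilon(1)=1$, $\epsilon(k)\epsilon(k+1)=0$; $\mathrm{LB}_s(m)=(\epsilon(1),\dots,\epsilon(s))$ if $M\ge s$. $\mathcal{F}_s$ ($s\ge2$) is the set of all $\mathrm{LB}_s(m)$, listed $\mathbf b_1,\dots,\mathbf b_\ell$ with $1+\mathbf b_k*F=\mathbf b_{k+1}*F$, $\mathbf b*F=\sum_{k=1}^s\mathbf b(k)F_{s-k+1}$; $\mathbf b_\ell$ is the largest block. $\mathbf b_{\ell+1}:=(1,0,1,0,\dots,1,0,1,1)$ if $s$ even, $(1,0,1,0,\dots,1,1,0)$ if $s$ odd (length $s$); $\widetilde{\mathbf b_k}:=\mathbf b_{k+1}$.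 $\omega=\phi^{-1}$, $\mathbf b\cdot\widehat F=\sum_k\mathbf b(k)\omega^{k-1}$. $\mathfrak F(x)=\frac{\phi}{\sqrt5}(\phi^x+\phi^{-x}\cos(\pi x)\phi^{-2})$, increasing on $[1,\infty)$ with inverse $\mathfrak F^{-1}$; $\{y\}$ is the fractional part. *)

theory Defs
  imports Complex_Main
begin

text \<open>Fibonacci numbers with F_1 = 1, F_2 = 2 (F 0 = 1 is a harmless filler
 consistent with the recursion).\<close>
fun FF :: "nat \<Rightarrow> nat" where
  "FF 0 = 1"
| "FF (Suc 0) = 1"
| "FF (Suc (Suc n)) = FF (Suc n) + FF n"

text \<open>A digit list xs = (eps(1),...,eps(M)) is a Zeckendorf expansion of m.
 List index k (0-based) corresponds to eps(k+1), weighted by F_{M-k}.\<close>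
definition is_zeck :: "nat \<Rightarrow> nat list \<Rightarrow> bool" where
  "is_zeck m xs \<longleftrightarrow> xs \<noteq> [] \<and> set xs \<subseteq> {0, 1} \<and> xs ! 0 = 1
     \<and> (\<forall>k. Suc k < length xs \<longrightarrow> xs ! k * xs ! Suc k = 0)
     \<and> m = (\<Sum>k<length xs. xs ! k * FF (length xs - k))"

definition zeck :: "nat \<Rightarrow> nat list" where
  "zeck m = (THE xs. is_zeck m xs)"

definition LB_defined :: "nat \<Rightarrow> nat \<Rightarrow> bool" where
  "LB_defined s m \<longleftrightarrow> s \<le> length (zeck m)"

definition LB :: "nat \<Rightarrow> nat \<Rightarrow> nat list" where
  "LB s m = take s (zeck m)"

definition Fblocks :: "nat \<Rightarrow> nat list set" where
  "Fblocks s = {LB s m | m. m \<ge> 1 \<and> LB_defined s m}"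

definition blockval :: "nat list \<Rightarrow> nat" where
  "blockval b = (\<Sum>k<length b. b ! k * FF (length b - k))"

definition largest_block :: "nat \<Rightarrow> nat list \<Rightarrow> bool" where
  "largest_block s b \<longleftrightarrow> b \<in> Fblocks s \<and> (\<forall>b'\<in>Fblocks s. blockval b' \<le> blockval b)"

text \<open>b_{l+1}: (1,0,...,1,0,1,1) for s even, (1,0,...,1,1,0) for s odd (1-based positions k).\<close>
definition special_block :: "nat \<Rightarrow> nat list" where
  "special_block s = map (\<lambda>k. if even s then (if k = s \<or> odd k then 1 else 0)
        else (if k = s - 1 \<or> (odd k \<and> k < s) then 1 else 0)) [1..<s+1]"

definition next_block :: "nat \<Rightarrow> nat list \<Rightarrow> nat list" where
  "next_block s b = (if largest_block s b then special_block s
      else (THE b'. b' \<in> Fblocks s \<and> blockval b' = blockval b + 1))"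

definition phi :: real where "phi = (1 + sqrt 5) / 2"

definition omega :: real where "omega = 1 / phi"

definition dotFhat :: "nat list \<Rightarrow> real" where
  "dotFhat b = (\<Sum>k<length b. real (b ! k) * omega ^ k)"

definition frakF :: "real \<Rightarrow> real" where
  "frakF x = phi / sqrt 5 * (phi powr x + phi powr (- x) * cos (pi * x) * phi powr (-2))"

definition frakF_inv :: "real \<Rightarrow> real" where
  "frakF_inv y = (THE x. 1 \<le> x \<and> frakF x = y)"

end

theory Submission
  imports Defs
begin

fun nz :: "nat list \<Rightarrow> bool" where
  "nz [] = True"
| "nz [x] = (x \<le> 1)"
| "nz (x # y # zs) = (x \<le> 1 \<and> x * y = 0 \<and> nz (y # zs))"

fun lexlt :: "nat list \<Rightarrow> nat list \<Rightarrow> bool" where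
  "lexlt [] _ = False"
| "lexlt (x # xs) [] = False"
| "lexlt (x # xs) (y # ys) = (x < y \<or> (x = y \<and> lexlt xs ys))"

lemma nz_Cons: "nz (x # xs) \<longleftrightarrow> x \<le> 1 \<and> (xs \<noteq> [] \<longrightarrow> x * hd xs = 0) \<and> nz xs"
  by (cases xs) auto

lemma nz_iff: "nz xs \<longleftrightarrow> set xs \<subseteq> {0,1} \<and> (\<forall>k. Suc k < length xs \<longrightarrow> xs ! k * xs ! Suc k = 0)"
proof (induction xs)
  case Nil then show ?case by simp
next
  case (Cons x xs)
  have "(\<forall>k. Suc k < length (x#xs) \<longrightarrow> (x#xs) ! k * (x#xs) ! Suc k = 0) \<longleftrightarrow>
        (xs \<noteq> [] \<longrightarrow> x * hd xs = 0) \<and> (\<forall>k. Suc k < length xs \<longrightarrow> xs ! k * xs ! Suc k = 0)"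
    (is "?L \<longleftrightarrow> ?R")
  proof
    assume L: ?L
    have 1: "xs \<noteq> [] \<longrightarrow> x * hd xs = 0" using L[rule_format, of 0] by (cases xs) auto
    have 2: "Suc k < length xs \<Longrightarrow> xs ! k * xs ! Suc k = 0" for k
      using L[rule_format, of "Suc k"] by simp
    show ?R using 1 2 by blast
  next
    assume R: ?R
    show ?L
    proof (intro allI impI)
      fix k assume k: "Suc k < length (x#xs)"
      show "(x#xs) ! k * (x#xs) ! Suc k = 0"
      proof (cases k)
        case 0 then show ?thesis using R k by (cases xs) auto
      next
        case (Suc j) then show ?thesis using R k by auto
      qed
    qed
  qed
  moreover have "set (x#xs) \<subseteq> {0,1} \<longleftrightarrow> x \<le> 1 \<and> set xs \<subseteq> {0,1}" by auto
  ultimately show ?case using Cons.IH nz_Cons by auto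
qed

lemma blockval_Cons: "blockval (x # xs) = x * FF (Suc (length xs)) + blockval xs"
  unfolding blockval_def length_Cons sum.lessThan_Suc_shift by simp

lemma blockval_Nil: "blockval [] = 0" unfolding blockval_def by simp

lemma dotFhat_Cons: "dotFhat (x # xs) = real x + omega * dotFhat xs"
  unfolding dotFhat_def length_Cons sum.lessThan_Suc_shift by (simp add: sum_distrib_left mult_ac)

lemma dotFhat_Nil: "dotFhat [] = 0" unfolding dotFhat_def by simp

lemma phi_gt1: "phi > 1"
proof -
  have "sqrt 5 > 1" by simp
  then show ?thesis unfolding phi_def by simp
qed

lemma sqrt5_sq: "sqrt 5 * sqrt 5 = (5::real)" by simp

lemma phi_sq: "phi^2 = phi + 1"
  unfolding phi_def by (simp add: power2_eq_square field_simps)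

lemma omega_eq: "omega = phi - 1"
proof -
  have "phi * (phi - 1) = 1" using phi_sq by (simp add: power2_eq_square algebra_simps)
  then show ?thesis unfolding omega_def using phi_gt1 by (simp add: field_simps)
qed

lemma phi_omega: "phi * omega = 1" unfolding omega_def using phi_gt1 by simp
lemma omega_pos: "omega > 0" unfolding omega_def using phi_gt1 by simp
lemma omega_lt1: "omega < 1" unfolding omega_def using phi_gt1 by simp
lemma sqrt5_eq: "sqrt 5 = 2*phi - 1" unfolding phi_def by (simp add: field_simps)
lemma omega_sq: "omega^2 = 1 - omega" using phi_sq unfolding omega_eq by (simp add: power2_eq_square algebra_simps)
lemma phi_gt16: "phi > 8/5"
proof -
  have "(11/5::real)^2 < 5" by (simp add: power2_eq_square)
  then have "11/5 < sqrt (5::real)" by (rule real_less_rsqrt)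
  then show ?thesis unfolding phi_def by simp
qed

lemma FF_pos: "FF n \<ge> 1"
  by (induction n rule: FF.induct) auto

lemma FF_Suc_mono: "FF n \<le> FF (Suc n)"
  by (cases n) auto

lemma FF_mono: "a \<le> b \<Longrightarrow> FF a \<le> FF b"
  using lift_Suc_mono_le[of FF, OF FF_Suc_mono] by blast

lemma FF_strict: assumes "1 \<le> a" "a < b" shows "FF a < FF b"
proof -
  have "FF (Suc n) < FF (Suc (Suc n))" for n using FF_pos[of n] by simp
  then have "\<And>i j. i < j \<Longrightarrow> FF (Suc i) < FF (Suc j)"
    using lift_Suc_mono_less[of "\<lambda>n. FF (Suc n)"] by blast
  from this[of "a - 1" "b - 1"] assms show ?thesis by simp
qed

lemma FF_ge: "FF n \<ge> n"
proof (induction n rule: FF.induct)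
  case (3 n) then show ?case using FF_pos[of n] by simp
qed auto

lemma blockval_lt: "nz xs \<Longrightarrow> blockval xs < FF (Suc (length xs)) \<and> (xs \<noteq> [] \<longrightarrow> hd xs = 0 \<longrightarrow> blockval xs < FF (length xs))"
proof (induction xs rule: nz.induct)
  case 1 then show ?case by (simp add: blockval_Nil)
next
  case (2 x) then show ?case by (auto simp: blockval_Cons blockval_Nil)
next
  case (3 x y zs)
  then have IH: "blockval (y # zs) < FF (Suc (Suc (length zs)))"
    and IH2: "y = 0 \<Longrightarrow> blockval (y#zs) < FF (Suc (length zs))" and x: "x \<le> 1" "x * y = 0" by auto
  show ?case
  proof (cases "x = 0")
    case True
    then show ?thesis using IH FF_Suc_mono[of "Suc (Suc (length zs))"] by (simp add: blockval_Cons)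
  next
    case False
    then have "x = 1" "y = 0" using x by auto
    then show ?thesis using IH2 by (simp add: blockval_Cons)
  qed
qed

lemma dot_nonneg: "dotFhat xs \<ge> 0"
  unfolding dotFhat_def using omega_pos by (auto intro!: sum_nonneg)

lemma dot_lt: "nz xs \<Longrightarrow> dotFhat xs < phi \<and> (xs \<noteq> [] \<longrightarrow> hd xs = 0 \<longrightarrow> dotFhat xs < 1)"
proof (induction xs rule: nz.induct)
  case 1 then show ?case using phi_gt1 by (simp add: dotFhat_Nil)
next
  case (2 x) then show ?case using phi_gt1 by (auto simp: dotFhat_Cons dotFhat_Nil)
next
  case (3 x y zs)
  then have IH: "dotFhat (y # zs) < phi"
    and IH2: "y = 0 \<Longrightarrow> dotFhat (y#zs) < 1" and x: "x \<le> 1" "x * y = 0" by auto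
  have om: "omega + 1 = phi" using omega_eq by simp
  show ?case
  proof (cases "x = 0")
    case True
    have "omega * dotFhat (y # zs) < omega * phi" using IH omega_pos by simp
    moreover have "dotFhat (x#y#zs) = real x + omega * dotFhat (y#zs)" by (rule dotFhat_Cons)
    ultimately show ?thesis using phi_omega phi_gt1 True by (simp add: mult.commute del: dotFhat_Cons)
  next
    case False
    then have "x = 1" "y = 0" using x by auto
    moreover have "omega * dotFhat (y # zs) < omega * 1" using IH2 omega_pos \<open>y = 0\<close> by simp
    moreover have "dotFhat (x#y#zs) = real x + omega * dotFhat (y#zs)" by (rule dotFhat_Cons)
    ultimately show ?thesis using om by (simp del: dotFhat_Cons)
  qed
qed

lemma nz_digit: "nz (x # xs) \<Longrightarrow> x \<le> 1" by (simp add: nz_Cons)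
lemma nz_tl: "nz (x # xs) \<Longrightarrow> nz xs" by (simp add: nz_Cons)

lemma lexlt_blockval: "lexlt xs ys \<Longrightarrow> length xs = length ys \<Longrightarrow> nz xs \<Longrightarrow> nz ys \<Longrightarrow> blockval xs < blockval ys"
proof (induction xs ys rule: lexlt.induct)
  case (3 x xs y ys)
  show ?case
  proof (cases "x < y")
    case True
    have "x \<le> 1" "y \<le> 1" using nz_digit[OF "3.prems"(3)] nz_digit[OF "3.prems"(4)] by auto
    then have "x = 0" "y = 1" using True by presburger+
    moreover have "blockval xs < FF (Suc (length xs))" using blockval_lt nz_tl[OF "3.prems"(3)] by blast
    ultimately show ?thesis using "3.prems"(2) by (simp add: blockval_Cons)
  next
    case False
    then have "x = y" "lexlt xs ys" using "3.prems"(1) by auto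
    then have "blockval xs < blockval ys" using "3.IH" "3.prems" nz_tl by auto
    then show ?thesis using \<open>x = y\<close> "3.prems"(2) by (simp add: blockval_Cons)
  qed
qed auto

lemma lexlt_dot: "lexlt xs ys \<Longrightarrow> nz xs \<Longrightarrow> dotFhat xs < dotFhat ys"
proof (induction xs ys rule: lexlt.induct)
  case (3 x xs y ys)
  show ?case
  proof (cases "x < y")
    case True
    then have "real x + 1 \<le> real y" by simp
    moreover have "dotFhat xs < phi" using dot_lt nz_tl[OF "3.prems"(2)] by blast
    moreover have "omega * dotFhat xs < omega * phi" using calculation omega_pos by simp
    moreover have "omega * dotFhat ys \<ge> 0" using dot_nonneg omega_pos by simp
    ultimately show ?thesis using phi_omega by (simp add: dotFhat_Cons mult.commute)
  next
    case False
    then have "x = y" "lexlt xs ys" using "3.prems"(1) by auto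
    then have "dotFhat xs < dotFhat ys" using "3.IH" "3.prems" nz_tl by auto
    then show ?thesis using \<open>x = y\<close> omega_pos by (simp add: dotFhat_Cons)
  qed
qed auto

lemma lexlt_take: "lexlt (take s xs) c \<Longrightarrow> lexlt xs c"
proof (induction xs arbitrary: s c)
  case (Cons x xs)
  then show ?case by (cases s; cases c) auto
qed simp

lemma lexlt_trich: "length xs = length ys \<Longrightarrow> xs = ys \<or> lexlt xs ys \<or> lexlt ys xs"
proof (induction xs arbitrary: ys)
  case (Cons x xs)
  then show ?case by (cases ys) auto
qed simp

lemma dot_take: "dotFhat (take s xs) \<le> dotFhat xs"
proof (induction xs arbitrary: s)
  case Nil then show ?case by simp
next
  case (Cons x xs)
  show ?case
  proof (cases s)
    case 0 then show ?thesis using dot_nonneg[of "x#xs"] by (simp add: dotFhat_Nil)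
  next
    case (Suc s')
    then show ?thesis using Cons.IH[of s'] omega_pos by (simp add: dotFhat_Cons)
  qed
qed

lemma nz_take: "nz xs \<Longrightarrow> nz (take s xs)"
  unfolding nz_iff by (auto dest: in_set_takeD)

lemma dot_hd1: "xs \<noteq> [] \<Longrightarrow> hd xs = 1 \<Longrightarrow> dotFhat xs \<ge> 1"
  using dot_nonneg[of "tl xs"] omega_pos by (cases xs) (auto simp: dotFhat_Cons)

lemma is_zeck_iff: "is_zeck m xs \<longleftrightarrow> xs \<noteq> [] \<and> nz xs \<and> hd xs = 1 \<and> m = blockval xs"
  unfolding is_zeck_def nz_iff blockval_def by (auto simp: hd_conv_nth)

lemma zeck_len: assumes "is_zeck m xs" shows "FF (length xs) \<le> m" "m < FF (Suc (length xs))"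
proof -
  from assms have a: "xs \<noteq> []" "nz xs" "hd xs = 1" "m = blockval xs" by (auto simp: is_zeck_iff)
  then obtain ys where "xs = 1 # ys" by (cases xs) auto
  then show "FF (length xs) \<le> m" using a by (simp add: blockval_Cons)
  show "m < FF (Suc (length xs))" using a blockval_lt by blast
qed

lemma len_unique: assumes "FF L \<le> m" "m < FF (Suc L)" "FF L' \<le> m" "m < FF (Suc L')" shows "L = L'"
proof (rule ccontr)
  assume "L \<noteq> L'"
  then have "Suc L \<le> L' \<or> Suc L' \<le> L" by auto
  then show False using FF_mono assms by (meson leD le_trans)
qed

lemma zeck_unique: assumes "is_zeck m xs" "is_zeck m ys" shows "xs = ys"
proof -
  have l: "length xs = length ys" using len_unique zeck_len assms by metis
  from assms have a: "nz xs" "nz ys" "m = blockval xs" "m = blockval ys" by (auto simp: is_zeck_iff)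
  have "\<not> lexlt xs ys" using lexlt_blockval[OF _ l] a by (metis less_irrefl)
  moreover have "\<not> lexlt ys xs" using lexlt_blockval[OF _ l[symmetric]] a by (metis less_irrefl)
  ultimately show ?thesis using lexlt_trich[OF l] by blast
qed

lemma blockval_rep: "blockval (replicate k 0 @ ys) = blockval ys"
  by (induction k) (auto simp: blockval_Cons)

lemma nz_rep: "nz (replicate k 0 @ ys) = nz ys"
  by (induction k) (auto simp: nz_Cons)

lemma zeck_exists: "m \<ge> 1 \<Longrightarrow> \<exists>xs. is_zeck m xs"
proof (induction m rule: less_induct)
  case (less m)
  define L where "L = (LEAST j. m < FF (Suc j))"
  have ex: "m < FF (Suc m)" using FF_ge[of "Suc m"] by simp
  have L1: "m < FF (Suc L)" unfolding L_def by (rule LeastI[of _ m]) (rule ex)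
  have "L \<noteq> 0"
  proof
    assume "L = 0" then show False using L1 less.prems by simp
  qed
  then obtain L0 where L0: "L = Suc L0" by (cases L) auto
  have "\<not> m < FF (Suc L0)" unfolding L0[symmetric] using not_less_Least[of L0 "\<lambda>j. m < FF (Suc j)"] L0 L_def by simp
  then have L2: "FF L \<le> m" using L0 by simp
  define r where "r = m - FF L"
  have r: "r < FF L0" using L1 L2 L0 unfolding r_def by simp
  have mr: "m = FF (Suc L0) + r" using L2 L0 unfolding r_def by simp
  show ?case
  proof (cases "r = 0")
    case True
    have "is_zeck m (1 # replicate L0 0)"
      unfolding is_zeck_iff using True mr blockval_rep[of L0 "[]"] nz_rep[of L0 "[]"]
      by (simp add: blockval_Cons blockval_Nil nz_Cons)
    then show ?thesis by blast
  next
    case False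
    have "r < m" using FF_pos[of L] mr L0 False by simp
    then obtain ys where ys: "is_zeck r ys" using less.IH False by force
    have "FF (length ys) \<le> r" using zeck_len[OF ys] by simp
    have "length ys < L0"
    proof (rule ccontr)
      assume "\<not> length ys < L0"
      then have "FF L0 \<le> FF (length ys)" using FF_mono by simp
      then show False using r \<open>FF (length ys) \<le> r\<close> by simp
    qed
    define k where "k = L0 - Suc (length ys)"
    have k: "L0 = Suc k + length ys" using \<open>length ys < L0\<close> k_def by simp
    have ysa: "ys \<noteq> []" "nz ys" "r = blockval ys" using ys by (auto simp: is_zeck_iff)
    have "is_zeck m (1 # 0 # replicate k 0 @ ys)"
      unfolding is_zeck_iff using ysa mr k blockval_rep[of k ys] nz_rep[of k ys]
      by (simp add: blockval_Cons nz_Cons)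
    then show ?thesis by blast
  qed
qed

lemma zeck_is: "m \<ge> 1 \<Longrightarrow> is_zeck m (zeck m)"
  unfolding zeck_def using zeck_exists zeck_unique by (metis theI)

lemma zeck_eq: "is_zeck m xs \<Longrightarrow> zeck m = xs"
proof -
  assume a: "is_zeck m xs"
  have "m \<ge> 1" using zeck_len(1)[OF a] FF_pos[of "length xs"] by linarith
  then show ?thesis using zeck_is zeck_unique a by blast
qed

lemma Fblocks_D: assumes "b \<in> Fblocks s" "s \<ge> 1"
  shows "length b = s" "nz b" "hd b = 1" "b \<noteq> []"
proof -
  obtain m where m: "m \<ge> 1" "s \<le> length (zeck m)" "b = take s (zeck m)"
    using assms(1) unfolding Fblocks_def LB_def LB_defined_def by auto
  have z: "zeck m \<noteq> []" "nz (zeck m)" "hd (zeck m) = 1" using zeck_is[OF m(1)] by (auto simp: is_zeck_iff)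
  show "length b = s" using m by simp
  show "nz b" using m z nz_take by simp
  show "b \<noteq> []" using m assms(2) z by auto
  show "hd b = 1" using m assms(2) z by (cases "zeck m"; cases s) auto
qed

lemma Fblocks_I: assumes "is_zeck m xs" "length xs = s" shows "xs \<in> Fblocks s"
proof -
  have "m \<ge> 1" using zeck_len(1)[OF assms(1)] FF_pos le_trans by blast
  moreover have "zeck m = xs" using zeck_eq assms(1) by blast
  ultimately show ?thesis unfolding Fblocks_def LB_def LB_defined_def using assms(2) by force
qed

lemma Fblocks_zeck: assumes "b \<in> Fblocks s" "s \<ge> 1" shows "is_zeck (blockval b) b"
  using Fblocks_D[OF assms] by (simp add: is_zeck_iff)

lemma next_ok: assumes "s \<ge> 1" "b \<in> Fblocks s" "\<not> largest_block s b"
  shows "next_block s b \<in> Fblocks s \<and> blockval (next_block s b) = Suc (blockval b)"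
proof -
  obtain b' where b': "b' \<in> Fblocks s" "blockval b' > blockval b"
    using assms unfolding largest_block_def by (auto simp: not_le)
  have "blockval b' < FF (Suc s)" using blockval_lt Fblocks_D[OF b'(1) assms(1)] by metis
  define m where "m = Suc (blockval b)"
  have m1: "m < FF (Suc s)" using b' \<open>blockval b' < FF (Suc s)\<close> m_def by simp
  have m2: "FF s \<le> m" using zeck_len(1)[OF Fblocks_zeck[OF assms(2,1)]] Fblocks_D[OF assms(2,1)] m_def by simp
  have z: "is_zeck m (zeck m)" using zeck_is m_def by simp
  have "length (zeck m) = s" using len_unique[OF zeck_len[OF z] m2 m1] .
  then have zF: "zeck m \<in> Fblocks s" using Fblocks_I z by blast
  have bz: "blockval (zeck m) = m" using z by (simp add: is_zeck_iff)
  have "(THE b'. b' \<in> Fblocks s \<and> blockval b' = blockval b + 1) = zeck m"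
  proof (rule the_equality)
    show "zeck m \<in> Fblocks s \<and> blockval (zeck m) = blockval b + 1" using zF bz m_def by simp
  next
    fix c assume c: "c \<in> Fblocks s \<and> blockval c = blockval b + 1"
    then have "is_zeck m c" using Fblocks_zeck[of c s] assms(1) m_def by simp
    then show "c = zeck m" using zeck_eq by simp
  qed
  then show ?thesis unfolding next_block_def using assms(3) zF bz m_def by simp
qed

lemma special_len: "length (special_block s) = s"
  unfolding special_block_def by simp

lemma special_nth: "i < s \<Longrightarrow> special_block s ! i = (if even s then (if Suc i = s \<or> odd (Suc i) then 1 else 0)
        else (if Suc i = s - 1 \<or> (odd (Suc i) \<and> Suc i < s) then 1 else 0))"
proof -
  assume i: "i < s"
  have u: "[1..<s+1] ! i = Suc i" using nth_upt[of 1 i "s+1"] i by (simp del: upt_Suc)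
  have l: "i < length [1..<s+1]" using i by (simp del: upt_Suc)
  show ?thesis unfolding special_block_def nth_map[OF l] u by simp
qed

lemma special_step: assumes "s \<ge> 2" shows "special_block (Suc (Suc s)) = 1 # 0 # special_block s"
proof (rule nth_equalityI)
  show "length (special_block (Suc (Suc s))) = length (1 # 0 # special_block s)" by (simp add: special_len)
next
  fix i assume i: "i < length (special_block (Suc (Suc s)))"
  then have i': "i < Suc (Suc s)" by (simp add: special_len)
  show "special_block (Suc (Suc s)) ! i = (1 # 0 # special_block s) ! i"
  proof (cases i)
    case 0 then show ?thesis using assms special_nth[OF i'] by simp
  next
    case (Suc j)
    show ?thesis
    proof (cases j)
      case 0 then show ?thesis using assms Suc special_nth[OF i'] by simp
    next
      case (Suc k)
      then have "k < s" using i' \<open>i = Suc j\<close> by simp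
      then show ?thesis using assms \<open>i = Suc j\<close> Suc special_nth[OF i'] special_nth[of k s] by auto
    qed
  qed
qed

lemma dot_special: "s \<ge> 2 \<Longrightarrow> dotFhat (special_block s) = phi"
proof (induction s rule: less_induct)
  case (less s)
  have om: "omega + 1 = phi" using omega_eq by simp
  have fix1: "1 + omega * (omega * phi) = phi" using phi_omega om by (simp add: algebra_simps)
  show ?case
  proof (cases "s \<ge> 4")
    case True
    define s' where "s' = s - 2"
    have s': "s = Suc (Suc s')" "s' \<ge> 2" using True unfolding s'_def by auto
    then have "dotFhat (special_block s') = phi" using less.IH by simp
    then show ?thesis using special_step[OF s'(2)] s'(1) fix1 by (simp add: dotFhat_Cons)
  next
    case False
    then have "s = 2 \<or> s = 3" using less.prems by auto
    then show ?thesis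
    proof
      assume "s = 2"
      then have "special_block s = [1,1]" unfolding special_block_def by (simp add: upt_rec)
      then show ?thesis using om by (simp add: dotFhat_Cons dotFhat_Nil)
    next
      assume "s = 3"
      then have "special_block s = [1,1,0]" unfolding special_block_def by (simp add: upt_rec)
      then show ?thesis using om by (simp add: dotFhat_Cons dotFhat_Nil)
    qed
  qed
qed

lemma psi_sq: "(1 - phi)^2 = (1 - phi) + 1"
  using phi_sq by (simp add: power2_eq_square algebra_simps)

lemma binet: "sqrt 5 * real (FF n) = phi^(Suc n) - (1-phi)^(Suc n)"
proof (induction n rule: FF.induct)
  case 1 then show ?case using sqrt5_eq by simp
next
  case 2 then show ?case using sqrt5_eq phi_sq psi_sq by (simp add: power2_eq_square algebra_simps)
next
  case (3 n)
  have a: "phi^(Suc(Suc(Suc n))) = phi^(Suc(Suc n)) + phi^(Suc n)"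
  proof -
    have "phi^(Suc(Suc(Suc n))) = phi^(Suc n) * phi^2" by (simp add: power2_eq_square)
    also have "\<dots> = phi^(Suc n) * (phi + 1)" using phi_sq by simp
    finally show ?thesis by (simp add: algebra_simps)
  qed
  have b: "(1-phi)^(Suc(Suc(Suc n))) = (1-phi)^(Suc(Suc n)) + (1-phi)^(Suc n)"
  proof -
    have "(1-phi)^(Suc(Suc(Suc n))) = (1-phi)^(Suc n) * (1-phi)^2" by (simp add: power2_eq_square)
    also have "\<dots> = (1-phi)^(Suc n) * ((1-phi) + 1)" using psi_sq by simp
    finally show ?thesis by (simp add: algebra_simps)
  qed
  have "sqrt 5 * real (FF (Suc (Suc n))) = sqrt 5 * real (FF (Suc n)) + sqrt 5 * real (FF n)"
    by (simp add: algebra_simps)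
  then show ?case using 3 a b by simp
qed

lemma psi_abs: "\<bar>(1 - phi)^n\<bar> = omega^n"
proof -
  have "\<bar>1 - phi\<bar> = omega" using omega_eq phi_gt1 by simp
  then show ?thesis by (simp add: power_abs)
qed

lemma E_bound: "set xs \<subseteq> {0,1} \<Longrightarrow>
   \<bar>sqrt 5 * real (blockval xs) - phi^(Suc (length xs)) * dotFhat xs\<bar> \<le> 1 - omega^(length xs)"
proof (induction xs)
  case Nil then show ?case by (simp add: blockval_Nil dotFhat_Nil)
next
  case (Cons x xs)
  define L where "L = length xs"
  have x: "x \<le> 1" using Cons.prems by auto
  have IH: "\<bar>sqrt 5 * real (blockval xs) - phi^(Suc L) * dotFhat xs\<bar> \<le> 1 - omega^L"
    using Cons L_def by auto
  have eq: "sqrt 5 * real (blockval (x#xs)) - phi^(Suc (Suc L)) * dotFhat (x#xs)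
      = - real x * (1-phi)^(Suc (Suc L)) + (sqrt 5 * real (blockval xs) - phi^(Suc L) * dotFhat xs)"
  proof -
    have "sqrt 5 * real (blockval (x#xs)) = real x * (sqrt 5 * real (FF (Suc L))) + sqrt 5 * real (blockval xs)"
      by (simp add: blockval_Cons L_def algebra_simps)
    also have "\<dots> = real x * (phi^(Suc (Suc L)) - (1-phi)^(Suc (Suc L))) + sqrt 5 * real (blockval xs)"
      using binet by simp
    finally have 1: "sqrt 5 * real (blockval (x#xs)) = real x * (phi^(Suc (Suc L)) - (1-phi)^(Suc (Suc L))) + sqrt 5 * real (blockval xs)" .
    have "phi^(Suc (Suc L)) * dotFhat (x#xs) = real x * phi^(Suc (Suc L)) + (phi * omega) * phi^(Suc L) * dotFhat xs"
      by (simp add: dotFhat_Cons algebra_simps)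
    then have 2: "phi^(Suc (Suc L)) * dotFhat (x#xs) = real x * phi^(Suc (Suc L)) + phi^(Suc L) * dotFhat xs"
      using phi_omega by simp
    show ?thesis using 1 2 by (simp add: algebra_simps)
  qed
  have t1: "\<bar>- real x * (1-phi)^(Suc (Suc L))\<bar> \<le> omega^(Suc (Suc L))"
  proof -
    have "\<bar>- real x * (1-phi)^(Suc (Suc L))\<bar> = real x * omega^(Suc (Suc L))"
      using psi_abs[of "Suc (Suc L)"] by (simp add: abs_mult)
    also have "\<dots> \<le> omega^(Suc (Suc L))" using x omega_pos
      by (simp add: mult_le_cancel_right1)
    finally show ?thesis .
  qed
  have om: "omega^(Suc (Suc L)) + omega^(Suc L) = omega^L"
  proof -
    have "omega^(Suc (Suc L)) + omega^(Suc L) = omega^L * (omega^2 + omega)" by (simp add: power2_eq_square algebra_simps)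
    then show ?thesis using omega_sq by simp
  qed
  have "\<bar>sqrt 5 * real (blockval (x#xs)) - phi^(Suc (Suc L)) * dotFhat (x#xs)\<bar> \<le> omega^(Suc (Suc L)) + (1 - omega^L)"
    unfolding eq using t1 IH abs_triangle_ineq[of "- real x * (1-phi)^(Suc (Suc L))"] by linarith
  also have "\<dots> = 1 - omega^(Suc L)" using om by simp
  finally show ?case by (simp add: L_def)
qed

lemma phi_pos: "phi > 0" using phi_gt1 by simp

lemma frakF_alt: "sqrt 5 * frakF x = phi powr (x+1) + phi powr (-(x+1)) * cos (pi*x)"
proof -
  have a: "phi powr (x+1) = phi * phi powr x" using phi_pos by (simp add: powr_add)
  have b: "phi powr (-(x+1)) = phi * (phi powr (-x) * phi powr (-2))"
  proof -
    have "-(x+1) = 1 + ((-x) + (-2))" by simp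
    then show ?thesis using phi_pos by (simp only: powr_add) simp
  qed
  show ?thesis unfolding frakF_def a b by (simp add: algebra_simps)
qed

lemma frakF_nat: "frakF (real m) = real (FF m)"
proof -
  have "sqrt 5 * frakF (real m) = phi^(Suc m) + inverse (phi^(Suc m)) * (-1)^m"
  proof -
    have "phi powr (real m + 1) = phi^(Suc m)" using powr_realpow[OF phi_pos, of "Suc m"] by (simp add: add.commute)
    moreover have "phi powr (-(real m + 1)) = inverse (phi^(Suc m))"
      using powr_minus[of phi "real m + 1"] calculation by simp
    ultimately show ?thesis using frakF_alt[of "real m"] by simp
  qed
  also have "\<dots> = sqrt 5 * real (FF m)"
  proof -
    have "1 - phi = - omega" using omega_eq by simp
    then have "(1-phi)^(Suc m) = (-omega)^(Suc m)" by simp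
    also have "\<dots> = (-1)^(Suc m) * omega^(Suc m)" by (rule power_minus)
    also have "\<dots> = - ((-1)^m * omega^(Suc m))" by (simp only: power_Suc)
    finally have "(1-phi)^(Suc m) = - ((-1)^m * omega^(Suc m))" .
    moreover have "omega^(Suc m) = inverse (phi^(Suc m))" unfolding omega_def by (simp add: power_inverse divide_inverse)
    ultimately show ?thesis using binet[of m] by simp
  qed
  finally show ?thesis by simp
qed

lemma frakF_exp: "frakF = (\<lambda>x. phi / sqrt 5 * (exp (x * ln phi) + exp (- x * ln phi) * cos (pi * x) * exp (- 2 * ln phi)))"
  by (rule ext) (simp add: frakF_def powr_def phi_pos)

lemma frakF_deriv: "(frakF has_real_derivative
   (phi / sqrt 5 * (ln phi * exp (x * ln phi) + ((- ln phi) * exp (- x * ln phi) * cos (pi * x)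
      + exp (- x * ln phi) * (- sin (pi * x) * pi)) * exp (- 2 * ln phi)))) (at x)"
  unfolding frakF_exp
  by (rule derivative_eq_intros refl | simp)+

lemma ln_phi_bounds: "ln phi \<ge> omega^2" "ln phi \<le> omega" "ln phi > 0"
proof -
  have "ln omega \<le> omega - 1" using ln_le_minus_one omega_pos by blast
  moreover have "ln omega = - ln phi" unfolding omega_def using phi_pos ln_inverse[of phi] by (simp add: inverse_eq_divide)
  moreover have "omega^2 = 1 - omega" by (rule omega_sq)
  ultimately show "ln phi \<ge> omega^2" by linarith
  have "ln phi \<le> phi - 1" using ln_le_minus_one[OF phi_pos] .
  then show "ln phi \<le> omega" using omega_eq by linarith
  show "ln phi > 0" using phi_gt1 ln_gt_zero by blast
qed

lemma exp_ln_phi_mult: "exp (2 * ln phi) = phi^2"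
proof -
  have "exp (2 * ln phi) = exp (ln phi + ln phi)" by (simp only: mult_2)
  also have "\<dots> = exp (ln phi) * exp (ln phi)" by (rule exp_add)
  also have "\<dots> = phi^2" using phi_pos by (simp only: exp_ln power2_eq_square)
  finally show ?thesis .
qed

lemma frakF_deriv_pos: assumes x: "x \<ge> 2"
  shows "phi / sqrt 5 * (ln phi * exp (x * ln phi) + ((- ln phi) * exp (- x * ln phi) * cos (pi * x)
      + exp (- x * ln phi) * (- sin (pi * x) * pi)) * exp (- 2 * ln phi)) > 0"
proof -
  define l where "l = ln phi"
  define u where "u = exp (x * l)"
  define v where "v = exp (- x * l)"
  define w where "w = exp (- 2 * l)"
  have l: "l \<ge> omega^2" "l \<le> omega" "l > 0" using ln_phi_bounds l_def by auto
  have upos: "u > 0" "v > 0" "w > 0" unfolding u_def v_def w_def by auto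
  have u: "u \<ge> phi^2"
  proof -
    have "2 * l \<le> x * l" using x l(3) by simp
    then have "exp (2*l) \<le> u" unfolding u_def by simp
    then show ?thesis using exp_ln_phi_mult l_def by simp
  qed
  have uv: "v = inverse u" unfolding u_def v_def by (simp add: exp_minus[symmetric])
  have w: "w = omega^2"
  proof -
    have "w = exp (- (2 * l))" unfolding w_def by simp
    also have "\<dots> = inverse (exp (2 * l))" by (rule exp_minus)
    also have "\<dots> = inverse (phi^2)" using exp_ln_phi_mult l_def by simp
    also have "\<dots> = omega^2" unfolding omega_def by (simp add: power_inverse divide_inverse)
    finally show ?thesis .
  qed
  have ps: "phi^2 * omega^2 = 1" using phi_omega by (simp add: power_mult_distrib[symmetric])
  have v: "v \<le> omega^2"
  proof -
    have "inverse u \<le> inverse (phi^2)" using u phi_pos by (simp add: le_imp_inverse_le)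
    then show ?thesis unfolding uv omega_def by (simp add: power_inverse divide_inverse)
  qed
  have A: "l * u \<ge> 1"
  proof -
    have "omega^2 * phi^2 \<le> l * u" using l u by (intro mult_mono) auto
    then show ?thesis using ps by (simp add: mult.commute)
  qed
  have om: "omega > 3/5" using phi_gt16 omega_eq by simp
  have om2: "omega^2 < 2/5" using omega_sq om by simp
  have B: "v * w * (l + pi) < 1"
  proof -
    have "l + pi \<le> 5" using l(2) omega_lt1 pi_less_4 by simp
    have "v * w \<le> omega^2 * omega^2" using v w upos by (intro mult_mono) auto
    also have "\<dots> \<le> (2/5) * (2/5)" using om2 by (intro mult_mono) auto
    finally have vw: "v * w \<le> 4/25" by simp
    have "v * w * (l + pi) \<le> (4/25) * 5"
      using vw \<open>l + pi \<le> 5\<close> upos l(3) pi_gt_zero by (intro mult_mono) auto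
    then show ?thesis by simp
  qed
  have C: "l * v * cos (pi * x) * w \<le> l * v * w"
  proof -
    have "(l * v * w) * cos (pi * x) \<le> (l * v * w) * 1"
      using upos l(3) by (intro mult_left_mono) auto
    then show ?thesis by (simp add: algebra_simps)
  qed
  have D: "v * sin (pi * x) * pi * w \<le> v * pi * w"
  proof -
    have "(v * pi * w) * sin (pi * x) \<le> (v * pi * w) * 1"
      using upos pi_gt_zero by (intro mult_left_mono) auto
    then show ?thesis by (simp add: algebra_simps)
  qed
  have "l * u + ((- l) * v * cos (pi * x) + v * (- sin (pi * x) * pi)) * w
      = l * u - l * v * cos (pi * x) * w - v * sin (pi * x) * pi * w" by (simp add: algebra_simps)
  also have "\<dots> \<ge> l * u - v * w * (l + pi)"
  proof -
    have E: "v * w * (l + pi) = l * v * w + v * pi * w" by (simp add: algebra_simps)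
    show ?thesis using C D E by linarith
  qed
  finally have "l * u + ((- l) * v * cos (pi * x) + v * (- sin (pi * x) * pi)) * w > 0" using A B by linarith
  moreover have "phi / sqrt 5 > 0" using phi_pos by simp
  ultimately have "phi / sqrt 5 * (l * u + ((- l) * v * cos (pi * x) + v * (- sin (pi * x) * pi)) * w) > 0"
    by (intro mult_pos_pos)
  then show ?thesis unfolding l_def u_def v_def w_def .
qed

lemma frakF_mono: assumes "2 \<le> a" "a < b" shows "frakF a < frakF b"
proof (rule DERIV_pos_imp_increasing[OF assms(2)])
  fix x assume "a \<le> x" "x \<le> b"
  then have "x \<ge> 2" using assms by simp
  then show "\<exists>y. DERIV frakF x :> y \<and> y > 0" using frakF_deriv frakF_deriv_pos by blast
qed

lemma frakF_cont: "isCont frakF x"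
  using frakF_deriv DERIV_isCont by blast

lemma frakF_small: assumes "1 \<le> x" "x \<le> 2" shows "frakF x < 3"
proof -
  have a: "phi powr (x+1) \<le> phi powr 3" using assms phi_gt1 by (intro powr_mono) auto
  have b: "phi powr (-(x+1)) \<le> phi powr 0" using assms phi_gt1 by (intro powr_mono) auto
  have c: "phi powr (-(x+1)) * cos (pi*x) \<le> phi powr (-(x+1)) * 1"
    by (intro mult_left_mono) auto
  have ps2: "phi * phi = phi + 1" using phi_sq by (simp add: power2_eq_square)
  have "phi^3 = (phi * phi) * phi" by (simp add: power3_eq_cube)
  also have "\<dots> = (phi + 1) * phi" by (simp only: ps2)
  also have "\<dots> = phi * phi + phi" by (simp add: algebra_simps)
  also have "\<dots> = 2*phi + 1" by (simp only: ps2)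
  finally have "phi^3 = 2*phi + 1" .
  then have a': "phi powr (x+1) \<le> 2*phi+1" using a phi_pos by simp
  have b': "phi powr (-(x+1)) \<le> 1" using b phi_pos by simp
  have "sqrt 5 * frakF x \<le> 2*phi + 2" using frakF_alt[of x] a' b' c by linarith
  also have "\<dots> < sqrt 5 * 3" using sqrt5_eq phi_gt16 by simp
  finally show ?thesis by simp
qed

lemma frakF_inv_loc: assumes z: "is_zeck K xs" and K4: "K \<ge> 4"
  shows "real (length xs) \<le> frakF_inv (real K)" "frakF_inv (real K) < real (length xs) + 1"
    "frakF (frakF_inv (real K)) = real K"
proof -
  define M where "M = length xs"
  have M1: "FF M \<le> K" "K < FF (Suc M)" using zeck_len[OF z] M_def by auto
  have M3: "M \<ge> 3"
  proof (rule ccontr)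
    assume "\<not> M \<ge> 3"
    then have "FF (Suc M) \<le> FF 3" using FF_mono by simp
    then show False using M1 K4 by (simp add: eval_nat_numeral)
  qed
  have fM: "frakF (real M) \<le> real K" using frakF_nat[of M] M1 by simp
  have fM1: "real K < frakF (real M + 1)" using frakF_nat[of "Suc M"] M1 by (simp add: add.commute)
  obtain x0 where x0: "real M \<le> x0" "x0 \<le> real M + 1" "frakF x0 = real K"
    using IVT[of frakF "real M" "real K" "real M + 1"] fM fM1 frakF_cont by force
  have x0': "x0 < real M + 1" using x0 fM1 by (cases "x0 = real M + 1") auto
  have uniq: "y = x0" if y: "1 \<le> y" "frakF y = real K" for y
  proof -
    have "y > 2"
    proof (rule ccontr)
      assume "\<not> y > 2"
      then have "y \<le> 2" by simp
      then have "frakF y < 3" using frakF_small[of y] y by blast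
      then show False using y K4 by simp
    qed
    moreover have "x0 \<ge> 2" using x0 M3 by simp
    ultimately show ?thesis
    proof (cases rule: linorder_cases[of y x0])
      case less then show ?thesis using frakF_mono[of y x0] \<open>y > 2\<close> y x0 by simp
    next
      case greater then show ?thesis using frakF_mono[of x0 y] \<open>x0 \<ge> 2\<close> y x0 by simp
    qed
  qed
  have "frakF_inv (real K) = x0"
    unfolding frakF_inv_def
  proof (rule the_equality)
    show "1 \<le> x0 \<and> frakF x0 = real K" using x0 M3 by simp
    show "\<And>y. 1 \<le> y \<and> frakF y = real K \<Longrightarrow> y = x0" using uniq by blast
  qed
  then show "real (length xs) \<le> frakF_inv (real K)" "frakF_inv (real K) < real (length xs) + 1"
    "frakF (frakF_inv (real K)) = real K" using x0 x0' M_def by auto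
qed

lemma core: assumes K4: "K \<ge> 4" and z: "is_zeck K xs"
  shows "\<bar>phi powr (frac (frakF_inv (real K))) - dotFhat xs\<bar> \<le> 2*phi/(sqrt 5 * real K - 1)"
proof -
  define M where "M = length xs"
  define x where "x = frakF_inv (real K)"
  have xM: "real M \<le> x" "x < real M + 1" "frakF x = real K"
    using frakF_inv_loc[OF z K4] M_def x_def by auto
  have "floor x = int M" using xM by (simp add: floor_eq_iff)
  then have fr: "frac x = x - real M" by (simp add: frac_def)
  define t where "t = x - real M"
  have zz: "nz xs" "K = blockval xs" using z by (auto simp: is_zeck_iff)
  have st: "set xs \<subseteq> {0,1}" using zz(1) by (simp add: nz_iff)
  define P where "P = phi^(Suc M)"
  have Ppos: "P > 0" unfolding P_def using phi_pos by simp
  define D where "D = dotFhat xs"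
  have E: "\<bar>sqrt 5 * real K - P * D\<bar> \<le> 1"
  proof -
    have "\<bar>sqrt 5 * real K - P * D\<bar> \<le> 1 - omega^M" using E_bound[OF st] zz(2) P_def D_def M_def by simp
    moreover have "omega^M \<ge> 0" using omega_pos by simp
    ultimately show ?thesis by linarith
  qed
  have F: "\<bar>sqrt 5 * real K - P * phi powr t\<bar> \<le> omega^(Suc M)"
  proof -
    have "sqrt 5 * real K = phi powr (x+1) + phi powr (-(x+1)) * cos (pi*x)" using frakF_alt[of x] xM by simp
    moreover have "phi powr (x+1) = P * phi powr t"
    proof -
      have "x + 1 = real (Suc M) + t" unfolding t_def by simp
      then have "phi powr (x+1) = phi powr (real (Suc M)) * phi powr t" by (simp add: powr_add)
      then show ?thesis using powr_realpow[OF phi_pos, of "Suc M"] P_def by simp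
    qed
    moreover have "\<bar>phi powr (-(x+1)) * cos (pi*x)\<bar> \<le> omega^(Suc M)"
    proof -
      have "\<bar>phi powr (-(x+1)) * cos (pi*x)\<bar> = phi powr (-(x+1)) * \<bar>cos (pi*x)\<bar>" by (simp add: abs_mult)
      also have "\<dots> \<le> phi powr (-(x+1)) * 1" by (intro mult_left_mono) auto
      also have "\<dots> \<le> phi powr (- real (Suc M))"
      proof -
        have "-(x+1) \<le> - real (Suc M)" using xM by simp
        then show ?thesis using powr_mono[of "-(x+1)" "- real (Suc M)" phi] phi_gt1 by simp
      qed
      also have "\<dots> = inverse (phi^(Suc M))" using powr_realpow[OF phi_pos, of "Suc M"] by (simp only: powr_minus)
      also have "\<dots> = omega^(Suc M)" unfolding omega_def by (simp add: power_inverse divide_inverse)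
      finally show ?thesis .
    qed
    ultimately show ?thesis by simp
  qed
  have om1: "omega^(Suc M) \<le> 1" using omega_pos omega_lt1 power_le_one[of omega "Suc M"] by linarith
  have G: "\<bar>P * (phi powr t - D)\<bar> \<le> 2"
  proof -
    have "P * (phi powr t - D) = (sqrt 5 * real K - P * D) - (sqrt 5 * real K - P * phi powr t)"
      by (simp add: algebra_simps)
    then show ?thesis using E F om1 by linarith
  qed
  moreover have "\<bar>P * (phi powr t - D)\<bar> = P * \<bar>phi powr t - D\<bar>" using Ppos by (simp add: abs_mult)
  ultimately have "\<bar>phi powr t - D\<bar> * P \<le> 2" by (simp add: mult.commute)
  then have H: "\<bar>phi powr t - D\<bar> \<le> 2 / P" using Ppos by (simp add: pos_le_divide_eq)
  have Dlt: "D < phi" using dot_lt[OF zz(1)] D_def by simp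
  have "sqrt 5 * real K - 1 \<le> P * D" using E by linarith
  also have "\<dots> < P * phi" using Dlt Ppos by simp
  finally have Pb: "sqrt 5 * real K - 1 < P * phi" .
  have pos: "sqrt 5 * real K - 1 > 0"
  proof -
    have "sqrt 5 * real K \<ge> 1 * 4" using K4 by (intro mult_mono) auto
    then show ?thesis by simp
  qed
  have "2 / P = 2 * phi / (P * phi)" using phi_pos by simp
  also have "\<dots> \<le> 2 * phi / (sqrt 5 * real K - 1)"
    using Pb pos phi_pos by (intro divide_left_mono) auto
  finally show ?thesis using H fr t_def x_def D_def by simp
qed

lemma ineq_lo: fixes a e p D :: real assumes "1 \<le> a" "0 < e" "\<bar>p - D\<bar> \<le> e" "a \<le> D" shows "a * (1 - e) \<le> p"
proof -
  have ae: "a * e \<ge> 1 * e" using assms by (intro mult_right_mono) auto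
  have pe: "p \<ge> D - e" using assms by (simp add: abs_le_iff)
  have "a * (1 - e) = a - a * e" by (simp add: algebra_simps)
  then show ?thesis using ae pe assms(4) by linarith
qed

lemma ineq_hi: fixes a e p D :: real assumes "1 \<le> a" "0 < e" "e < 1" "\<bar>p - D\<bar> \<le> e" "D < a" shows "p < a / (1 - e)"
proof -
  have "e * (a + e - 1) \<ge> 0" using assms by (intro mult_nonneg_nonneg) auto
  then have "(a + e) * (1 - e) \<le> a" by (simp add: algebra_simps)
  then have "a + e \<le> a / (1 - e)" using assms by (simp add: pos_le_divide_eq)
  moreover have "p < a + e" using assms by (simp add: abs_le_iff)
  ultimately show ?thesis by linarith
qed

lemma pw_lo: assumes "a > 0" "0 < e" "e < 1" "a * (1 - e) \<le> phi powr t"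
  shows "log phi a - (- log phi (1 - e)) \<le> t"
proof -
  have "phi powr (log phi a + log phi (1 - e)) = a * (1 - e)"
    using assms phi_gt1 by (simp add: powr_add)
  then have "phi powr (log phi a + log phi (1 - e)) \<le> phi powr t" using assms by simp
  then show ?thesis using phi_gt1 by simp
qed

lemma pw_hi: assumes "a > 0" "0 < e" "e < 1" "phi powr t < a / (1 - e)"
  shows "t < log phi a + (- log phi (1 - e))"
proof -
  have "phi powr (log phi a - log phi (1 - e)) = a / (1 - e)"
    using assms phi_gt1 by (simp add: powr_diff)
  then have "phi powr t < phi powr (log phi a - log phi (1 - e))" using assms by simp
  then show ?thesis using phi_gt1 by simp
qed

theorem lemma4p4:
  fixes K :: "nat \<Rightarrow> nat" and s :: nat and b :: "nat list"
  assumes Kpos: "\<And>n. K n > 0"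
    and Klim: "filterlim K at_top sequentially"
    and s2: "s \<ge> 2"
    and bF: "b \<in> Fblocks s"
  shows "\<exists>\<gamma> \<gamma>' :: nat \<Rightarrow> real.
           \<gamma> \<longlonglongrightarrow> 0 \<and> \<gamma>' \<longlonglongrightarrow> 0
         \<and> (largest_block s b \<longrightarrow> (\<forall>n. \<gamma>' n = 0))
         \<and> (\<forall>n. n \<in> {n. LB_defined s (K n) \<and> LB s (K n) = b} \<longleftrightarrow>
               log phi (dotFhat b) + \<gamma> n \<le> frac (frakF_inv (real (K n)))
             \<and> frac (frakF_inv (real (K n))) < log phi (dotFhat (next_block s b)) + \<gamma>' n)"
proof -
  have s1: "s \<ge> 1" using s2 by simp
  note bD = Fblocks_D[OF bF s1]
  define nb where "nb = next_block s b"
  define lo where "lo = log phi (dotFhat b)"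
  define up where "up = log phi (dotFhat nb)"
  define A where "A n \<longleftrightarrow> LB_defined s (K n) \<and> LB s (K n) = b" for n
  define t where "t n = frac (frakF_inv (real (K n)))" for n
  define eps where "eps n = 2*phi/(sqrt 5 * real (K n) - 1)" for n
  define eta where "eta n = - log phi (1 - eps n)" for n
  define P where "P n e \<longleftrightarrow> (A n \<longrightarrow> lo - e \<le> t n \<and> t n < up + e)
      \<and> (\<not> A n \<longrightarrow> t n < lo + e \<or> (\<not> largest_block s b \<and> up - e \<le> t n))" for n e
  have phi1: "phi \<noteq> 1" "0 < phi" "1 < phi" using phi_gt1 by auto
  have db: "1 \<le> dotFhat b" "dotFhat b < phi" using dot_hd1[OF bD(4,3)] dot_lt[OF bD(2)] by auto
  have lo: "0 \<le> lo" "lo < 1"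
  proof -
    show "0 \<le> lo" unfolding lo_def using db phi1 by simp
    have "log phi (dotFhat b) < log phi phi" using db phi1 by simp
    then show "lo < 1" unfolding lo_def using phi1 by simp
  qed
  have nbL: "dotFhat nb = phi" if "largest_block s b"
    using that dot_special[OF s2] unfolding nb_def next_block_def by simp
  have nbN: "nb \<in> Fblocks s \<and> blockval nb = Suc (blockval b)" if "\<not> largest_block s b"
    using next_ok[OF s1 bF that] nb_def by simp
  have dnb: "1 \<le> dotFhat nb"
  proof (cases "largest_block s b")
    case True then show ?thesis using nbL phi1 by simp
  next
    case False
    then have "nb \<in> Fblocks s" using nbN by simp
    from Fblocks_D[OF this s1] show ?thesis using dot_hd1 by simp
  qed
  have up: "0 \<le> up" unfolding up_def using dnb phi1 by simp
  have upL: "up = 1" if "largest_block s b" unfolding up_def using nbL[OF that] phi1 by simp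
  have t01: "0 \<le> t n" "t n < 1" for n unfolding t_def by (auto simp: frac_lt_1)
  have fallback: "P n 2" for n using lo up t01[of n] unfolding P_def by auto
  have Kr: "filterlim (\<lambda>n. real (K n)) at_top sequentially"
    using filterlim_compose[OF filterlim_real_sequentially Klim] by simp
  have eps0: "eps \<longlonglongrightarrow> 0"
  proof -
    have s5: "sqrt 5 > (0::real)" by simp
    have "filterlim (\<lambda>n. sqrt 5 * real (K n)) at_top sequentially"
      by (rule filterlim_tendsto_pos_mult_at_top[OF tendsto_const s5 Kr])
    then have "filterlim (\<lambda>n. -1 + sqrt 5 * real (K n)) at_top sequentially"
      by (rule filterlim_tendsto_add_at_top[OF tendsto_const])
    then have "(\<lambda>n. inverse (-1 + sqrt 5 * real (K n))) \<longlonglongrightarrow> 0"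
      by (rule tendsto_inverse_0_at_top)
    then have "(\<lambda>n. 2 * phi * inverse (-1 + sqrt 5 * real (K n))) \<longlonglongrightarrow> 2 * phi * 0"
      by (intro tendsto_mult tendsto_const)
    then show ?thesis unfolding eps_def by (simp add: divide_inverse)
  qed
  have eta0: "eta \<longlonglongrightarrow> 0"
  proof -
    have "(\<lambda>n. 1 - eps n) \<longlonglongrightarrow> 1 - 0" by (intro tendsto_diff tendsto_const eps0)
    then have "(\<lambda>n. log phi (1 - eps n)) \<longlonglongrightarrow> log phi 1"
      using phi1 by (intro tendsto_log tendsto_const) auto
    then have "(\<lambda>n. - log phi (1 - eps n)) \<longlonglongrightarrow> - log phi 1" by (rule tendsto_minus)
    then show ?thesis unfolding eta_def by simp
  qed
  have ev: "eventually (\<lambda>n. P n (eta n)) sequentially"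
  proof -
    have "eventually (\<lambda>n. max 4 (FF s) \<le> K n) sequentially"
      using Klim unfolding filterlim_at_top by blast
    then show ?thesis
    proof (rule eventually_mono)
      fix n assume Kn: "max 4 (FF s) \<le> K n"
      define xs where "xs = zeck (K n)"
      have K4: "K n \<ge> 4" using Kn by simp
      have z: "is_zeck (K n) xs" unfolding xs_def using zeck_is K4 by simp
      have nzxs: "nz xs" using z by (simp add: is_zeck_iff)
      have Ms: "s \<le> length xs"
      proof (rule ccontr)
        assume "\<not> s \<le> length xs"
        then have "FF (Suc (length xs)) \<le> FF s" using FF_mono by simp
        then show False using zeck_len(2)[OF z] Kn by simp
      qed
      have LBd: "LB_defined s (K n)" unfolding LB_defined_def xs_def[symmetric] using Ms .
      have An: "A n \<longleftrightarrow> take s xs = b" unfolding A_def LB_def xs_def using LBd by simp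
      define b' where "b' = take s xs"
      have b'F: "b' \<in> Fblocks s" unfolding Fblocks_def b'_def xs_def LB_def using LBd K4 by force
      note b'D = Fblocks_D[OF b'F s1]
      define D where "D = dotFhat xs"
      have cr: "\<bar>phi powr (t n) - D\<bar> \<le> eps n" using core[OF K4 z] unfolding t_def D_def eps_def .
      have epos: "eps n > 0" and elt: "eps n < 1"
      proof -
        have "(2*phi - 1) * 4 \<le> (2*phi - 1) * real (K n)" using K4 phi1 by (intro mult_left_mono) auto
        then have big: "sqrt 5 * real (K n) - 1 > 2 * phi" using sqrt5_eq phi1 by simp
        then show "eps n > 0" unfolding eps_def using phi1 by simp
        show "eps n < 1" unfolding eps_def using big phi1 by simp
      qed
      have etaeq: "eta n = - log phi (1 - eps n)" by (simp add: eta_def)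
      have Dtake: "dotFhat b' \<le> D" unfolding b'_def D_def by (rule dot_take)
      show "P n (eta n)"
      proof (cases "A n")
        case True
        then have bb: "b' = b" using An b'_def by simp
        have D1: "dotFhat b \<le> D" using Dtake bb by simp
        have D2: "D < dotFhat nb"
        proof (cases "largest_block s b")
          case True
          then show ?thesis using nbL dot_lt[OF nzxs] D_def by simp
        next
          case False
          note nn = nbN[OF False]
          note nbD = Fblocks_D[OF conjunct1[OF nn] s1]
          have l: "length b = length nb" using bD nbD by simp
          have "lexlt b nb"
          proof -
            have "b \<noteq> nb" using nn by auto
            moreover have "\<not> lexlt nb b" using lexlt_blockval[OF _ l[symmetric] nbD(2) bD(2)] nn by auto
            ultimately show ?thesis using lexlt_trich[OF l] by blast
          qed
          then have "lexlt (take s xs) nb" using bb b'_def by simp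
          then have "lexlt xs nb" by (rule lexlt_take)
          then show ?thesis using lexlt_dot nzxs D_def by blast
        qed
        have "lo - eta n \<le> t n"
          unfolding lo_def etaeq
          using pw_lo[OF _ epos elt ineq_lo[OF db(1) epos cr D1]] db by simp
        moreover have "t n < up + eta n"
          unfolding up_def etaeq
          using pw_hi[OF _ epos elt ineq_hi[OF dnb epos elt cr D2]] dnb by simp
        ultimately show ?thesis unfolding P_def using True by simp
      next
        case False
        then have bb: "b' \<noteq> b" using An b'_def by simp
        have l: "length b' = length b" using bD b'D by simp
        have "lexlt b' b \<or> lexlt b b'" using lexlt_trich[OF l] bb by blast
        then show ?thesis
        proof
          assume lt: "lexlt b' b"
          then have "lexlt (take s xs) b" using b'_def by simp
          then have "lexlt xs b" by (rule lexlt_take)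
          then have D2: "D < dotFhat b" using lexlt_dot nzxs D_def by blast
          have "t n < lo + eta n"
            unfolding lo_def etaeq
            using pw_hi[OF _ epos elt ineq_hi[OF db(1) epos elt cr D2]] db by simp
          then show ?thesis unfolding P_def using False by simp
        next
          assume gt: "lexlt b b'"
          have bvlt: "blockval b < blockval b'" using lexlt_blockval[OF gt l[symmetric] bD(2) b'D(2)] .
          have nl: "\<not> largest_block s b" using bvlt b'F unfolding largest_block_def by force
          note nn = nbN[OF nl]
          note nbD = Fblocks_D[OF conjunct1[OF nn] s1]
          have l2: "length b' = length nb" using b'D nbD by simp
          have "\<not> lexlt b' nb" using lexlt_blockval[OF _ l2 b'D(2) nbD(2)] nn bvlt by auto
          then have "b' = nb \<or> lexlt nb b'" using lexlt_trich[OF l2] by blast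
          then have "dotFhat nb \<le> dotFhat b'" using lexlt_dot[OF _ nbD(2)] by (auto simp: less_imp_le)
          then have D1: "dotFhat nb \<le> D" using Dtake by simp
          have "up - eta n \<le> t n"
            unfolding up_def etaeq
            using pw_lo[OF _ epos elt ineq_lo[OF dnb epos cr D1]] dnb by simp
          then show ?thesis unfolding P_def using False nl by simp
        qed
      qed
    qed
  qed
  define eta' where "eta' n = (if P n (eta n) then eta n else 2)" for n
  have eta'0: "eta' \<longlonglongrightarrow> 0"
  proof -
    have "eventually (\<lambda>n. eta n = eta' n) sequentially"
      using ev by (rule eventually_mono) (simp add: eta'_def)
    then show ?thesis using eta0 by (rule Lim_transform_eventually[rotated])
  qed
  have Pall: "P n (eta' n)" for n using fallback[of n] by (simp add: eta'_def)
  define g where "g n = (if A n then - eta' n else if t n < lo + eta' n then eta' n else 0)" for n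
  define g' where "g' n = (if largest_block s b then 0 else if A n then eta' n
      else if t n < lo + eta' n then 0 else - eta' n)" for n
  have absto: "(\<lambda>n. \<bar>eta' n\<bar>) \<longlonglongrightarrow> 0" using tendsto_rabs[OF eta'0] by simp
  have mabsto: "(\<lambda>n. - \<bar>eta' n\<bar>) \<longlonglongrightarrow> 0" using tendsto_minus[OF absto] by simp
  have g0: "g \<longlonglongrightarrow> 0"
    by (rule real_tendsto_sandwich[OF _ _ mabsto absto]) (auto intro!: always_eventually simp: g_def)
  have g'0: "g' \<longlonglongrightarrow> 0"
    by (rule real_tendsto_sandwich[OF _ _ mabsto absto]) (auto intro!: always_eventually simp: g'_def)
  have main: "A n \<longleftrightarrow> lo + g n \<le> t n \<and> t n < up + g' n" for n
  proof (cases "A n")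
    case True
    then have "lo - eta' n \<le> t n" "t n < up + eta' n" using Pall[of n] unfolding P_def by auto
    moreover have "largest_block s b \<Longrightarrow> t n < up" using upL t01[of n] by simp
    ultimately show ?thesis using True unfolding g_def g'_def by auto
  next
    case False
    then have "t n < lo + eta' n \<or> (\<not> largest_block s b \<and> up - eta' n \<le> t n)"
      using Pall[of n] unfolding P_def by auto
    then show ?thesis using False unfolding g_def g'_def by auto
  qed
  show ?thesis
  proof (intro exI conjI)
    show "g \<longlonglongrightarrow> 0" by (rule g0)
    show "g' \<longlonglongrightarrow> 0" by (rule g'0)
    show "largest_block s b \<longrightarrow> (\<forall>n. g' n = 0)" by (simp add: g'_def)
    show "\<forall>n. n \<in> {n. LB_defined s (K n) \<and> LB s (K n) = b} \<longleftrightarrow>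
               log phi (dotFhat b) + g n \<le> frac (frakF_inv (real (K n)))
             \<and> frac (frakF_inv (real (K n))) < log phi (dotFhat (next_block s b)) + g' n"
      using main unfolding A_def t_def lo_def up_def nb_def by simp
  qed
qed

end
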